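(* Let $a=a_1\cdots a_n$ be a signed permutation on $[n]$. Let $b=b_0b_1\cdots b_{2n+1}$ be the sequence on $\{-(n+1),\ldots,-1,0,1,\ldots,n\}$ given by $b_0=0$, $b_{2i-1}=-a_i$, $b_{2i}=a_i$ for $1\le i\le n$, and $b_{2n+1}=-(n+1)$. Let $\theta_1=(b_0,b_1)(b_2,b_3)\cdots(b_{2n},b_{2n+1})$ and $\theta_2=(0,-1)(1,-2)\cdots(n,-n-1)$, permutations of $\{-(n+1),\ldots,n\}$. Then $$d_r(a)\ \ge\ \frac{2n+2-C(\theta_1\theta_2)}{2}.$$
   Context: Permutations are multiplied as composition of maps, $(\sigma\tau)(x)=\sigma(\tau(x))$; $C(\pi)$ is the number of cycles of $\pi$, fixed points included. A signed permutation on $[n]$ is a sequence $a_1\cdots a_n$ with $a_k\in\{\pm1,\ldots,\pm n\}$ such that $|a_1|,\ldots,|a_n|$ is a permutation of $[n]$. A reversal $\varrho_{i,j}$ ($1\le i\le j\le n$) changes $a$ into $a_1\cdots a_{i-1}(-a_j)(-a_{j-1})\cdots(-a_i)a_{j+1}\cdots a_n$. The reversal distance $d_r(a)$ is the minimum number of reversals needed to transform $a$ into $12\cdots n$. *)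

theory Defs
  imports Complex_Main "HOL-Combinatorics.Transposition"
begin

text \<open>Signed permutation a = a_1 ... a_n, represented as a list of integers of length n
  (a_k = a ! (k-1)).\<close>
definition signed_perm :: "nat \<Rightarrow> int list \<Rightarrow> bool" where
  "signed_perm n a \<longleftrightarrow> length a = n \<and> set (map abs a) = {1..int n}"

text \<open>Reversal rho_{i,j} (1-indexed, 1 <= i <= j <= n).\<close>
definition reversal :: "nat \<Rightarrow> nat \<Rightarrow> int list \<Rightarrow> int list" where
  "reversal i j a = take (i - 1) a @ map uminus (rev (take (j - i + 1) (drop (i - 1) a))) @ drop j a"

definition valid_reversal :: "nat \<Rightarrow> nat \<times> nat \<Rightarrow> bool" where
  "valid_reversal n r \<longleftrightarrow> 1 \<le> fst r \<and> fst r \<le> snd r \<and> snd r \<le> n"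

definition apply_reversals :: "int list \<Rightarrow> (nat \<times> nat) list \<Rightarrow> int list" where
  "apply_reversals a rs = foldl (\<lambda>x r. reversal (fst r) (snd r) x) a rs"

definition identity_sp :: "nat \<Rightarrow> int list" where
  "identity_sp n = map int [1..<n+1]"

definition reversal_distance :: "int list \<Rightarrow> nat" where
  "reversal_distance a = (LEAST k. \<exists>rs. length rs = k \<and> (\<forall>r\<in>set rs. valid_reversal (length a) r)
       \<and> apply_reversals a rs = identity_sp (length a))"

definition num_cycles :: "'a set \<Rightarrow> ('a \<Rightarrow> 'a) \<Rightarrow> nat" where
  "num_cycles S f = card {{y. \<exists>k. (f ^^ k) x = y} | x. x \<in> S}"

definition bseq :: "int list \<Rightarrow> nat \<Rightarrow> int" where
  "bseq a m = (let n = length a in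
     if m = 0 then 0
     else if m = 2 * n + 1 then - (int n + 1)
     else if odd m then - (a ! ((m + 1) div 2 - 1))
     else a ! (m div 2 - 1))"

definition theta1 :: "int list \<Rightarrow> int \<Rightarrow> int" where
  "theta1 a = foldr (\<lambda>k f. transpose (bseq a (2 * k)) (bseq a (2 * k + 1)) \<circ> f) [0..<length a + 1] id"

definition theta2 :: "nat \<Rightarrow> int \<Rightarrow> int" where
  "theta2 n = foldr (\<lambda>k f. transpose (int k) (- int k - 1) \<circ> f) [0..<n + 1] id"

end

theory Submission
  imports Defs "HOL-Combinatorics.Orbits"
begin

definition FF :: "(nat \<Rightarrow> 'a) \<Rightarrow> nat \<Rightarrow> 'a \<Rightarrow> 'a" where
  "FF b N = foldr (\<lambda>k f. transpose (b (2 * k)) (b (2 * k + 1)) \<circ> f) [0..<N] id"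

definition xo :: "nat \<Rightarrow> nat" where "xo m = (if even m then Suc m else m - 1)"

lemma foldr_comp_gen:
  "foldr (\<lambda>k f. h k \<circ> f) xs g = foldr (\<lambda>k f. h k \<circ> f) xs id \<circ> g"
  by (induction xs) auto

lemma FF_Suc: "FF b (Suc N) = FF b N \<circ> transpose (b (2 * N)) (b (2 * N + 1))"
  unfolding FF_def
  using foldr_comp_gen[of "\<lambda>k. transpose (b (2 * k)) (b (2 * k + 1))" "[0..<N]" "transpose (b (2 * N)) (b (2 * N + 1))"]
  by simp

lemma FF_char:
  assumes "inj_on b {..<2*N}"
  shows "(\<forall>m<2*N. FF b N (b m) = b (xo m)) \<and> (\<forall>z. z \<notin> b ` {..<2*N} \<longrightarrow> FF b N z = z)"
  using assms
proof (induction N)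
  case 0
  then show ?case by (simp add: FF_def)
next
  case (Suc N)
  have inj: "inj_on b {..<2*N}" using Suc.prems by (rule inj_on_subset) auto
  note IH = Suc.IH[OF inj]
  have ne: "b m \<noteq> b m'" if "m < 2 * Suc N" "m' < 2 * Suc N" "m \<noteq> m'" for m m'
    using Suc.prems that by (auto dest: inj_onD)
  show ?case
  proof (intro conjI allI impI)
    fix m assume m: "m < 2 * Suc N"
    show "FF b (Suc N) (b m) = b (xo m)"
    proof (cases "m < 2 * N")
      case True
      then have "transpose (b (2 * N)) (b (2 * N + 1)) (b m) = b m"
        using ne[of m "2*N"] ne[of m "2*N+1"] m by (auto simp: transpose_def)
      then show ?thesis using IH True by (simp add: FF_Suc)
    next
      case False
      then have "m = 2 * N \<or> m = 2 * N + 1" using m by auto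
      then show ?thesis
      proof
        assume e: "m = 2 * N"
        have "b (2*N+1) \<notin> b ` {..<2*N}"
        proof
          assume "b (2*N+1) \<in> b ` {..<2*N}"
          then obtain m' where "m' < 2*N" "b (2*N+1) = b m'" by auto
          then show False using ne[of "2*N+1" m'] by simp
        qed
        then show ?thesis using IH e by (simp add: FF_Suc xo_def)
      next
        assume e: "m = 2 * N + 1"
        have "b (2*N) \<notin> b ` {..<2*N}"
        proof
          assume "b (2*N) \<in> b ` {..<2*N}"
          then obtain m' where "m' < 2*N" "b (2*N) = b m'" by auto
          then show False using ne[of "2*N" m'] by simp
        qed
        then show ?thesis using IH e ne[of "2*N" "2*N+1"] by (simp add: FF_Suc xo_def transpose_def)
      qed
    qed
  next
    fix z assume z: "z \<notin> b ` {..<2 * Suc N}"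
    then have "transpose (b (2 * N)) (b (2 * N + 1)) z = z" by (auto simp: transpose_def)
    moreover have "z \<notin> b ` {..<2 * N}" using z by auto
    ultimately show "FF b (Suc N) z = z" using IH by (simp add: FF_Suc)
  qed
qed

lemma xo_lt: "m < 2 * N \<Longrightarrow> xo m < 2 * N" by (auto simp: xo_def)
lemma xo_xo: "xo (xo m) = m" by (auto simp: xo_def)

lemma FF_invol:
  assumes "inj_on b {..<2*N}"
  shows "FF b N (FF b N z) = z"
proof (cases "z \<in> b ` {..<2*N}")
  case True
  then obtain m where m: "m < 2*N" "z = b m" by auto
  then show ?thesis using FF_char[OF assms] xo_lt[OF m(1)] xo_xo by simp
next
  case False
  then show ?thesis using FF_char[OF assms] by simp
qed

lemma FF_permutes:
  assumes "inj_on b {..<2*N}" "b ` {..<2*N} \<subseteq> S"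
  shows "FF b N permutes S"
proof -
  have "FF b N permutes (b ` {..<2*N})"
    unfolding permutes_def
  proof (intro conjI allI impI)
    fix x assume "x \<notin> b ` {..<2*N}" then show "FF b N x = x" using FF_char[OF assms(1)] by simp
  next
    fix y show "\<exists>!x. FF b N x = y"
      using FF_invol[OF assms(1)] by metis
  qed
  then show ?thesis using assms(2) permutes_subset by blast
qed

lemma num_cycles_orbit:
  assumes "f permutes S" "finite S"
  shows "num_cycles S f = card (orbit f ` S)"
proof -
  have p: "permutation f" using assms permutation_permutes by blast
  have "{{y. \<exists>k. (f ^^ k) x = y} | x. x \<in> S} = orbit f ` S"
    using orbit_altdef_permutation[OF p] by auto
  then show ?thesis unfolding num_cycles_def by simp
qed

lemma orbit_same:
  assumes "permutation f" "y \<in> orbit f x" shows "orbit f y = orbit f x"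
proof
  show "orbit f y \<subseteq> orbit f x" using assms(2) orbit_trans by fast
  have "x \<in> orbit f y" using orbit_swap[OF permutation_self_in_orbit[OF assms(1)] assms(2)] .
  then show "orbit f x \<subseteq> orbit f y" using orbit_trans by fast
qed

lemma cycles_step:
  assumes fin: "finite S" and f: "f permutes S" and g: "g permutes S"
    and pq: "p \<in> S" "q \<in> S"
    and h1: "\<And>z. z \<in> S \<Longrightarrow> f z \<notin> {p,q} \<Longrightarrow> g z = f z"
    and h2: "\<And>z. z \<in> S \<Longrightarrow> f z \<in> {p,q} \<Longrightarrow> g z \<in> {p,q}"
  shows "num_cycles S g \<le> num_cycles S f + 1"
proof -
  have pf: "permutation f" using f fin permutation_permutes by blast
  have pg: "permutation g" using g fin permutation_permutes by blast
  have sub: "orbit g ` S \<subseteq> (orbit f ` S - {orbit f p}) \<union> {orbit g p, orbit g q}"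
  proof
    fix Ob assume "Ob \<in> orbit g ` S"
    then obtain x where x: "x \<in> S" "Ob = orbit g x" by auto
    show "Ob \<in> (orbit f ` S - {orbit f p}) \<union> {orbit g p, orbit g q}"
    proof (cases "p \<in> orbit g x \<or> q \<in> orbit g x")
      case True
      then have "orbit g x = orbit g p \<or> orbit g x = orbit g q"
        using orbit_same[OF pg, of p x] orbit_same[OF pg, of q x] by blast
      then show ?thesis using x(2) by blast
    next
      case False
      have nP: "(g ^^ k) x \<notin> {p,q}" for k
        using False orbit_altdef_permutation[OF pg, of x] by auto
      have eq: "(g ^^ k) x = (f ^^ k) x" for k
      proof (induction k)
        case 0 then show ?case by simp
      next
        case (Suc k)
        have zS: "(f ^^ k) x \<in> S" using permutes_in_funpow_image[OF f x(1)] .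
        have "g ((g ^^ k) x) \<notin> {p,q}" using nP[of "Suc k"] by simp
        then have "f ((f ^^ k) x) \<notin> {p,q}" using h2[OF zS] Suc by auto
        then show ?case using h1[OF zS] Suc by simp
      qed
      have oe: "orbit g x = orbit f x"
        using eq orbit_altdef_permutation[OF pg, of x] orbit_altdef_permutation[OF pf, of x] by auto
      have "p \<in> orbit f p" using permutation_self_in_orbit[OF pf] .
      then have "orbit f x \<noteq> orbit f p" using False oe by auto
      then show ?thesis using x oe by blast
    qed
  qed
  have finA: "finite (orbit f ` S)" using fin by simp
  have inA: "orbit f p \<in> orbit f ` S" using pq by simp
  have "card (orbit g ` S) \<le> card ((orbit f ` S - {orbit f p}) \<union> {orbit g p, orbit g q})"
    by (intro card_mono[OF _ sub]) (use finA in simp)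
  also have "\<dots> \<le> card (orbit f ` S - {orbit f p}) + card {orbit g p, orbit g q}"
    by (rule card_Un_le)
  also have "\<dots> \<le> card (orbit f ` S) - 1 + 2"
  proof -
    have "card {orbit g p, orbit g q} \<le> 2" by (simp add: card_insert_le_m1)
    moreover have "card (orbit f ` S - {orbit f p}) = card (orbit f ` S) - 1"
      using inA finA by (simp add: card_Diff_singleton)
    ultimately show ?thesis by simp
  qed
  also have "\<dots> = card (orbit f ` S) + 1"
  proof -
    have "0 < card (orbit f ` S)" using inA finA card_gt_0_iff by blast
    then show ?thesis by simp
  qed
  finally show ?thesis
    using num_cycles_orbit[OF f fin] num_cycles_orbit[OF g fin] by simp
qed

lemma sp_props:
  assumes "signed_perm n a"
  shows "length a = n" "\<And>k l. k < n \<Longrightarrow> l < n \<Longrightarrow> \<bar>a!k\<bar> = \<bar>a!l\<bar> \<Longrightarrow> k = l"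
    "\<And>k. k < n \<Longrightarrow> a!k \<noteq> 0" "\<And>k. k < n \<Longrightarrow> \<bar>a!k\<bar> \<le> int n"
proof -
  show len: "length a = n" using assms unfolding signed_perm_def by simp
  have st: "set (map abs a) = {1..int n}" using assms unfolding signed_perm_def by simp
  have "card (set (map abs a)) = length (map abs a)" using st len by simp
  then have d: "distinct (map abs a)" by (rule card_distinct)
  show "\<And>k l. k < n \<Longrightarrow> l < n \<Longrightarrow> \<bar>a!k\<bar> = \<bar>a!l\<bar> \<Longrightarrow> k = l"
    using d len by (simp add: nth_eq_iff_index_eq[symmetric])
  have mem: "\<bar>a!k\<bar> \<in> {1..int n}" if "k < n" for k
    using st len that by (metis length_map nth_map nth_mem)
  show "\<And>k. k < n \<Longrightarrow> a!k \<noteq> 0" using mem by fastforce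
  show "\<And>k. k < n \<Longrightarrow> \<bar>a!k\<bar> \<le> int n" using mem by auto
qed

lemma bseq_0[simp]: "bseq a 0 = 0" by (simp add: bseq_def)
lemma bseq_last: "bseq a (2 * length a + 1) = - (int (length a) + 1)" by (simp add: bseq_def)
lemma bseq_odd: "k < length a \<Longrightarrow> bseq a (2 * k + 1) = - a ! k" by (simp add: bseq_def)
lemma bseq_even: "k < length a \<Longrightarrow> bseq a (2 * k + 2) = a ! k" by (simp add: bseq_def)

lemma idx_cases:
  fixes m n :: nat
  assumes "m < 2 * n + 2"
  obtains "m = 0" | "m = 2 * n + 1" | k where "k < n" "m = 2 * k + 1" | k where "k < n" "m = 2 * k + 2"
proof -
  have "m = 0 \<or> m = 2 * n + 1 \<or> (odd m \<and> m < 2 * n + 1) \<or> (even m \<and> m > 0)" using assms by presburger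
  then consider "m = 0" | "m = 2 * n + 1" | "odd m" "m < 2 * n + 1" | "even m" "m > 0" by blast
  then show ?thesis
  proof cases
    case 3 then have "\<exists>k. m = 2 * k + 1" by presburger
    then obtain k where "m = 2 * k + 1" by blast
    then show ?thesis using that 3 by auto
  next
    case 4 then have "\<exists>k. m = 2 * k + 2" by presburger
    then obtain k where "m = 2 * k + 2" by blast
    then show ?thesis using that 4 assms by auto
  qed (use that in auto)
qed

lemma sp_eq: "signed_perm n a \<Longrightarrow> k < n \<Longrightarrow> l < n \<Longrightarrow> a!k = a!l \<Longrightarrow> k = l"
  using sp_props(2) by metis
lemma sp_neg: "signed_perm n a \<Longrightarrow> k < n \<Longrightarrow> l < n \<Longrightarrow> a!k = - a!l \<Longrightarrow> False"
proof -
  assume a: "signed_perm n a" "k < n" "l < n" "a!k = - a!l"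
  then have "k = l" using sp_props(2)[OF a(1) a(2) a(3)] by simp
  then show False using a sp_props(3)[OF a(1) a(2)] by simp
qed

lemma bseq_inj:
  assumes sp: "signed_perm n a"
  shows "inj_on (bseq a) {..<2*(n+1)}"
proof (rule inj_onI)
  have len: "length a = n" using sp_props(1)[OF sp] .
  note nz = sp_props(3)[OF sp] and bd = sp_props(4)[OF sp]
  fix m1 m2 assume m: "m1 \<in> {..<2*(n+1)}" "m2 \<in> {..<2*(n+1)}" and e: "bseq a m1 = bseq a m2"
  have m1: "m1 < 2*n+2" and m2: "m2 < 2*n+2" using m by auto
  show "m1 = m2"
  proof (cases rule: idx_cases[OF m1])
    case 1
    then show ?thesis
    proof (cases rule: idx_cases[OF m2])
      case 2 then show ?thesis using e 1 bseq_last[of a] len by simp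
    next
      case (3 k) then show ?thesis using e 1 bseq_odd[of k a] len nz[of k] by simp
    next
      case (4 k) then show ?thesis using e 1 bseq_even[of k a] len nz[of k] by simp
    qed (use 1 in simp)
  next
    case 2
    then show ?thesis
    proof (cases rule: idx_cases[OF m2])
      case 1 then show ?thesis using e 2 bseq_last[of a] len by simp
    next
      case (3 k) then show ?thesis using e 2 bseq_odd[of k a] bseq_last[of a] len bd[of k] by simp
    next
      case (4 k) then show ?thesis using e 2 bseq_even[of k a] bseq_last[of a] len bd[of k] by simp
    qed (use 2 in simp)
  next
    case (3 k)
    then show ?thesis
    proof (cases rule: idx_cases[OF m2])
      case 1 then show ?thesis using e 3 bseq_odd[of k a] len nz[of k] by simp
    next
      case 2 then show ?thesis using e 3 bseq_odd[of k a] bseq_last[of a] len bd[of k] by simp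
    next
      case (3 l) then show ?thesis using e \<open>k < n\<close> \<open>m1 = 2*k+1\<close> bseq_odd[of k a] bseq_odd[of l a] len sp_eq[OF sp, of k l] by simp
    next
      case (4 l) then show ?thesis using e \<open>k < n\<close> \<open>m1 = 2*k+1\<close> bseq_odd[of k a] bseq_even[of l a] len sp_neg[OF sp, of l k] by simp
    qed
  next
    case (4 k)
    then show ?thesis
    proof (cases rule: idx_cases[OF m2])
      case 1 then show ?thesis using e 4 bseq_even[of k a] len nz[of k] by simp
    next
      case 2 then show ?thesis using e 4 bseq_even[of k a] bseq_last[of a] len bd[of k] by simp
    next
      case (3 l) then show ?thesis using e \<open>k < n\<close> \<open>m1 = 2*k+2\<close> bseq_even[of k a] bseq_odd[of l a] len sp_neg[OF sp, of k l] by simp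
    next
      case (4 l) then show ?thesis using e \<open>k < n\<close> \<open>m1 = 2*k+2\<close> bseq_even[of k a] bseq_even[of l a] len sp_eq[OF sp, of k l] by simp
    qed
  qed
qed

lemma bseq_img:
  assumes sp: "signed_perm n a"
  shows "bseq a ` {..<2*(n+1)} \<subseteq> {-(int n+1)..int n}"
proof
  have len: "length a = n" using sp_props(1)[OF sp] .
  note bd = sp_props(4)[OF sp]
  fix z assume "z \<in> bseq a ` {..<2*(n+1)}"
  then obtain m where m: "m < 2*n+2" "z = bseq a m" by auto
  show "z \<in> {-(int n+1)..int n}"
  proof (cases rule: idx_cases[OF m(1)])
    case 2 then show ?thesis using m bseq_last[of a] len by simp
  next
    case (3 k) then show ?thesis using m bseq_odd[of k a] len bd[of k] by (simp add: abs_le_iff)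
  next
    case (4 k) then show ?thesis using m bseq_even[of k a] len bd[of k] by (simp add: abs_le_iff)
  qed (use m in simp)
qed

lemma rev_len:
  assumes "valid_reversal n (i,j)" "length a = n"
  shows "length (reversal i j a) = n"
  using assms unfolding valid_reversal_def reversal_def by auto

lemma rev_nth:
  assumes v: "valid_reversal n (i,j)" and len: "length a = n" and k: "k < n"
  shows "reversal i j a ! k = (if i - 1 \<le> k \<and> k \<le> j - 1 then - a!(i + j - 2 - k) else a!k)"
proof -
  have ij: "1 \<le> i" "i \<le> j" "j \<le> n" using v unfolding valid_reversal_def by auto
  let ?M = "take (j - i + 1) (drop (i - 1) a)"
  have lM: "length ?M = j - i + 1" using ij len by simp
  have lT: "length (take (i - 1) a) = i - 1" using ij len by simp
  show ?thesis
  proof (cases "k < i - 1")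
    case True
    then show ?thesis unfolding reversal_def using lT by (simp add: nth_append)
  next
    case False
    show ?thesis
    proof (cases "k \<le> j - 1")
      case True
      have "reversal i j a ! k = (map uminus (rev ?M) @ drop j a) ! (k - (i - 1))"
        unfolding reversal_def using lT False by (simp add: nth_append)
      also have "\<dots> = - (rev ?M ! (k - (i - 1)))"
      proof -
        have kk: "k - (i - 1) < length (map uminus (rev ?M))" using lM True False ij by simp
        have kk2: "k - (i - 1) < length (rev ?M)" using kk by (simp only: length_map)
        show ?thesis using nth_append_left[OF kk] nth_map[OF kk2] by simp
      qed
      also have "\<dots> = - (?M ! (j - i + 1 - Suc (k - (i - 1))))"
        using lM True False ij by (simp add: rev_nth)
      also have "\<dots> = - a ! (i + j - 2 - k)"
        using lM True False ij len by simp
      finally show ?thesis using True False by simp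
    next
      case False2: False
      have "reversal i j a ! k = (map uminus (rev ?M) @ drop j a) ! (k - (i - 1))"
        unfolding reversal_def using lT False by (simp add: nth_append)
      also have "\<dots> = drop j a ! (k - (i - 1) - (j - i + 1))"
      proof -
        have kk: "length (map uminus (rev ?M)) \<le> k - (i - 1)" using lM False2 False ij by simp
        show ?thesis using nth_append_right[OF kk] lM by simp
      qed
      also have "\<dots> = a ! k"
        using False2 False ij len k by simp
      finally show ?thesis using False2 False by simp
    qed
  qed
qed

lemma rev_sp:
  assumes sp: "signed_perm n a" and v: "valid_reversal n (i,j)"
  shows "signed_perm n (reversal i j a)"
proof -
  have ij: "1 \<le> i" "i \<le> j" "j \<le> n" using v unfolding valid_reversal_def by auto
  have len: "length a = n" using sp_props(1)[OF sp] .
  have dec: "take (i - 1) a @ take (j - i + 1) (drop (i - 1) a) @ drop j a = a"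
  proof -
    have "drop (j - i + 1) (drop (i - 1) a) = drop j a" using ij by simp
    then have "take (j - i + 1) (drop (i - 1) a) @ drop j a = drop (i - 1) a"
      by (metis append_take_drop_id)
    then show ?thesis by simp
  qed
  have "set (map abs (reversal i j a)) = set (map abs (take (i - 1) a @ take (j - i + 1) (drop (i - 1) a) @ drop j a))"
    unfolding reversal_def by (simp add: image_image)
  then have "set (map abs (reversal i j a)) = set (map abs a)" by (metis dec)
  then show ?thesis using sp rev_len[OF v len] unfolding signed_perm_def by simp
qed

definition sg :: "nat \<Rightarrow> nat \<Rightarrow> nat \<Rightarrow> nat" where
  "sg i j m = (if 2*i - 1 \<le> m \<and> m \<le> 2*j then 2*i + 2*j - 1 - m else m)"

lemma bseq_rev:
  assumes sp: "signed_perm n a" and v: "valid_reversal n (i,j)" and m: "m < 2*n+2"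
  shows "bseq (reversal i j a) m = bseq a (sg i j m)"
proof -
  have ij: "1 \<le> i" "i \<le> j" "j \<le> n" using v unfolding valid_reversal_def by auto
  have len: "length a = n" using sp_props(1)[OF sp] .
  have len': "length (reversal i j a) = n" using rev_len[OF v len] .
  show ?thesis
  proof (cases rule: idx_cases[OF m])
    case 1 then show ?thesis using ij by (simp add: sg_def)
  next
    case 2
    have "sg i j m = m" using 2 ij unfolding sg_def by (split if_split; arith)
    then show ?thesis using 2 bseq_last[of a] bseq_last[of "reversal i j a"] len len' by simp
  next
    case (3 k)
    have r: "reversal i j a ! k = (if i - 1 \<le> k \<and> k \<le> j - 1 then - a!(i + j - 2 - k) else a!k)"
      using rev_nth[OF v len 3(1)] .
    show ?thesis
    proof (cases "i - 1 \<le> k \<and> k \<le> j - 1")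
      case True
      have "sg i j m = 2 * (i + j - 2 - k) + 2" using True 3 ij unfolding sg_def by (split if_split; arith)
      moreover have "i + j - 2 - k < n" using True ij by linarith
      ultimately show ?thesis using bseq_odd[of k "reversal i j a"] bseq_even[of "i+j-2-k" a] 3 len len' r True by simp
    next
      case False
      have "sg i j m = m" using False 3 ij unfolding sg_def by (split if_split; arith)
      then show ?thesis using bseq_odd[of k "reversal i j a"] bseq_odd[of k a] 3 len len' r False by auto
    qed
  next
    case (4 k)
    have r: "reversal i j a ! k = (if i - 1 \<le> k \<and> k \<le> j - 1 then - a!(i + j - 2 - k) else a!k)"
      using rev_nth[OF v len 4(1)] .
    show ?thesis
    proof (cases "i - 1 \<le> k \<and> k \<le> j - 1")
      case True
      have "sg i j m = 2 * (i + j - 2 - k) + 1" using True 4 ij unfolding sg_def by (split if_split; arith)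
      moreover have "i + j - 2 - k < n" using True ij by linarith
      ultimately show ?thesis using bseq_even[of k "reversal i j a"] bseq_odd[of "i+j-2-k" a] 4 len len' r True by simp
    next
      case False
      have "sg i j m = m" using False 4 ij unfolding sg_def by (split if_split; arith)
      then show ?thesis using bseq_even[of k "reversal i j a"] bseq_even[of k a] 4 len len' r False by auto
    qed
  qed
qed

lemma sg_lt: "valid_reversal n (i,j) \<Longrightarrow> m < 2*n+2 \<Longrightarrow> sg i j m < 2*n+2"
  by (auto simp: sg_def valid_reversal_def)

lemma sg_sg: "valid_reversal n (i,j) \<Longrightarrow> sg i j (sg i j m) = m"
  by (auto simp: sg_def valid_reversal_def)

lemma xo_even: "xo (2*t) = 2*t+1" by (simp add: xo_def)
lemma xo_odd: "xo (2*t+1) = 2*t" by (simp add: xo_def)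
lemma xo_odd': "xo (Suc (2*t)) = 2*t" by (simp add: xo_def)

lemma tr_other: "x \<noteq> a \<Longrightarrow> x \<noteq> b \<Longrightarrow> transpose a b x = x"
  by (auto simp: transpose_def)

lemma idx_identity:
  assumes v: "valid_reversal n (i,j)" and m: "m < 2*n+2"
  shows "sg i j (xo (sg i j m)) = transpose (2*i-1) (2*j) (transpose (2*i-2) (2*j+1) (xo m))"
proof -
  have ij: "1 \<le> i" "i \<le> j" "j \<le> n" using v unfolding valid_reversal_def by auto
  have sgE: "sg i j x = (if 2*i - 1 \<le> x \<and> x \<le> 2*j then 2*i + 2*j - 1 - x else x)" for x
    by (simp add: sg_def)
  have "\<exists>t. m = 2*t \<or> m = 2*t+1" by presburger
  then obtain t where t: "m = 2*t \<or> m = 2*t+1" by blast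
  then show ?thesis
  proof
    assume e: "m = 2*t"
    have xm: "xo m = 2*t+1" using e xo_even by simp
    show ?thesis
    proof (cases "i \<le> t \<and> t \<le> j")
      case True
      have "sg i j m = 2*(i+j-1-t)+1" using True e ij unfolding sgE by (split if_split; arith)
      then have w: "xo (sg i j m) = 2*(i+j-1-t)" by (simp add: xo_odd xo_odd')
      show ?thesis
      proof (cases "t = j")
        case True2: True
        have l: "sg i j (2*(i+j-1-t)) = 2*i-2" using True2 ij unfolding sgE by (split if_split; arith)
        have r1: "transpose (2*i-2) (2*j+1) (2*t+1) = 2*i-2" using True2 by simp
        have r2: "transpose (2*i-1) (2*j) (2*i-2) = 2*i-2" using ij by (intro tr_other; arith)
        show ?thesis using w l r1 r2 xm by simp
      next
        case False2: False
        have l: "sg i j (2*(i+j-1-t)) = 2*t+1" using True False2 ij unfolding sgE by (split if_split; arith)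
        have r1: "transpose (2*i-2) (2*j+1) (2*t+1) = 2*t+1" using True False2 ij by (intro tr_other; arith)
        have r2: "transpose (2*i-1) (2*j) (2*t+1) = 2*t+1" using True False2 ij by (intro tr_other; arith)
        show ?thesis using w l r1 r2 xm by simp
      qed
    next
      case False
      have "sg i j m = 2*t" using False e ij unfolding sgE by (split if_split; arith)
      then have w: "xo (sg i j m) = 2*t+1" by (simp add: xo_even)
      show ?thesis
      proof (cases "t + 1 = i")
        case True2: True
        have l: "sg i j (2*t+1) = 2*j" using True2 ij unfolding sgE by (split if_split; arith)
        have r1: "transpose (2*i-2) (2*j+1) (2*t+1) = 2*t+1" using True2 ij by (intro tr_other; arith)
        have r2: "transpose (2*i-1) (2*j) (2*t+1) = 2*j" using True2 by (auto simp: transpose_def)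
        show ?thesis using w l r1 r2 xm by simp
      next
        case False2: False
        have l: "sg i j (2*t+1) = 2*t+1" using False False2 ij unfolding sgE by (split if_split; arith)
        have r1: "transpose (2*i-2) (2*j+1) (2*t+1) = 2*t+1" using False False2 ij by (intro tr_other; arith)
        have r2: "transpose (2*i-1) (2*j) (2*t+1) = 2*t+1" using False False2 ij by (intro tr_other; arith)
        show ?thesis using w l r1 r2 xm by simp
      qed
    qed
  next
    assume e: "m = 2*t+1"
    have xm: "xo m = 2*t" using e xo_odd by simp
    show ?thesis
    proof (cases "i \<le> t + 1 \<and> t + 1 \<le> j")
      case True
      have "sg i j m = 2*(i+j-1-t)" using True e ij unfolding sgE by (split if_split; arith)
      then have w: "xo (sg i j m) = 2*(i+j-1-t)+1" by (simp add: xo_even)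
      show ?thesis
      proof (cases "t + 1 = i")
        case True2: True
        have l: "sg i j (2*(i+j-1-t)+1) = 2*j+1" using True2 ij unfolding sgE by (split if_split; arith)
        have r1: "transpose (2*i-2) (2*j+1) (2*t) = 2*j+1" using True2 by (auto simp: transpose_def)
        have r2: "transpose (2*i-1) (2*j) (2*j+1) = 2*j+1" using ij by (intro tr_other; arith)
        show ?thesis using w l r1 r2 xm by simp
      next
        case False2: False
        have l: "sg i j (2*(i+j-1-t)+1) = 2*t" using True False2 ij unfolding sgE by (split if_split; arith)
        have r1: "transpose (2*i-2) (2*j+1) (2*t) = 2*t" using True False2 ij by (intro tr_other; arith)
        have r2: "transpose (2*i-1) (2*j) (2*t) = 2*t" using True False2 ij by (intro tr_other; arith)
        show ?thesis using w l r1 r2 xm by simp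
      qed
    next
      case False
      have "sg i j m = 2*t+1" using False e ij unfolding sgE by (split if_split; arith)
      then have w: "xo (sg i j m) = 2*t" by (simp add: xo_odd xo_odd')
      show ?thesis
      proof (cases "t = j")
        case True2: True
        have l: "sg i j (2*t) = 2*i-1" using True2 ij unfolding sgE by (split if_split; arith)
        have r1: "transpose (2*i-2) (2*j+1) (2*t) = 2*t" using True2 ij by (intro tr_other; arith)
        have r2: "transpose (2*i-1) (2*j) (2*t) = 2*i-1" using True2 by (auto simp: transpose_def)
        show ?thesis using w l r1 r2 xm by simp
      next
        case False2: False
        have l: "sg i j (2*t) = 2*t" using False False2 ij unfolding sgE by (split if_split; arith)
        have r1: "transpose (2*i-2) (2*j+1) (2*t) = 2*t" using False False2 ij by (intro tr_other; arith)
        have r2: "transpose (2*i-1) (2*j) (2*t) = 2*t" using False False2 ij by (intro tr_other; arith)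
        show ?thesis using w l r1 r2 xm by simp
      qed
    qed
  qed
qed

lemma theta1_FF: "theta1 a = FF (bseq a) (length a + 1)"
  by (simp add: theta1_def FF_def)

lemma tr_inj:
  assumes "inj_on b A" "p \<in> A" "q \<in> A" "r \<in> A"
  shows "transpose (b p) (b q) (b r) = b (transpose p q r)"
  using assms by (auto simp: transpose_def inj_on_eq_iff)

lemma theta1_rev:
  assumes sp: "signed_perm n a" and v: "valid_reversal n (i,j)"
  shows "theta1 (reversal i j a) =
    transpose (bseq a (2*i-1)) (bseq a (2*j)) \<circ> transpose (bseq a (2*i-2)) (bseq a (2*j+1)) \<circ> theta1 a"
proof
  fix z
  have ij: "1 \<le> i" "i \<le> j" "j \<le> n" using v unfolding valid_reversal_def by auto
  have len: "length a = n" using sp_props(1)[OF sp] .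
  have sp': "signed_perm n (reversal i j a)" using rev_sp[OF sp v] .
  have len': "length (reversal i j a) = n" using sp_props(1)[OF sp'] .
  define b where "b = bseq a"
  define b' where "b' = bseq (reversal i j a)"
  have inj: "inj_on b {..<2*(n+1)}" unfolding b_def using bseq_inj[OF sp] .
  have inj': "inj_on b' {..<2*(n+1)}" unfolding b'_def using bseq_inj[OF sp'] .
  have bb: "b' m = b (sg i j m)" if "m < 2*(n+1)" for m
    unfolding b_def b'_def using bseq_rev[OF sp v] that by simp
  have t1: "theta1 a = FF b (n+1)" unfolding b_def theta1_FF len ..
  have t1': "theta1 (reversal i j a) = FF b' (n+1)" unfolding b'_def theta1_FF len' ..
  note C = FF_char[OF inj] and C' = FF_char[OF inj']
  have idx: "2*i-1 < 2*(n+1)" "2*j < 2*(n+1)" "2*i-2 < 2*(n+1)" "2*j+1 < 2*(n+1)" using ij by auto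
  show "theta1 (reversal i j a) z = (transpose (bseq a (2*i-1)) (bseq a (2*j)) \<circ> transpose (bseq a (2*i-2)) (bseq a (2*j+1)) \<circ> theta1 a) z"
  proof (cases "z \<in> b ` {..<2*(n+1)}")
    case True
    then obtain m where m: "m < 2*(n+1)" "z = b m" by auto
    have sm: "sg i j m < 2*(n+1)" using sg_lt[OF v, of m] m by simp
    have z': "z = b' (sg i j m)" using bb[OF sm] sg_sg[OF v] m by simp
    have xs: "xo (sg i j m) < 2*(n+1)" using xo_lt sm by blast
    have xm: "xo m < 2*(n+1)" using xo_lt m by blast
    have "theta1 (reversal i j a) z = b' (xo (sg i j m))" using t1' z' C' sm by simp
    also have "\<dots> = b (sg i j (xo (sg i j m)))" using bb[OF xs] .
    also have "\<dots> = b (transpose (2*i-1) (2*j) (transpose (2*i-2) (2*j+1) (xo m)))"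
      using idx_identity[OF v, of m] m by simp
    also have "\<dots> = transpose (b (2*i-1)) (b (2*j)) (transpose (b (2*i-2)) (b (2*j+1)) (b (xo m)))"
    proof -
      have tl: "transpose (2*i-2) (2*j+1) (xo m) < 2*(n+1)" using idx xm by (auto simp: transpose_def)
      show ?thesis
        using tr_inj[OF inj, of "2*i-2" "2*j+1" "xo m"] tr_inj[OF inj, of "2*i-1" "2*j" "transpose (2*i-2) (2*j+1) (xo m)"]
          idx xm tl by simp
    qed
    also have "\<dots> = (transpose (bseq a (2*i-1)) (bseq a (2*j)) \<circ> transpose (bseq a (2*i-2)) (bseq a (2*j+1)) \<circ> theta1 a) z"
      using t1 C m unfolding b_def by simp
    finally show ?thesis .
  next
    case False
    have nb': "z \<notin> b' ` {..<2*(n+1)}"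
    proof
      assume "z \<in> b' ` {..<2*(n+1)}"
      then obtain m where "m < 2*(n+1)" "z = b' m" by auto
      then show False using False bb sg_lt[OF v, of m] by auto
    qed
    have "theta1 (reversal i j a) z = z" using t1' C' nb' by simp
    moreover have "theta1 a z = z" using t1 C False by simp
    moreover have "z \<noteq> b k" if "k < 2*(n+1)" for k using False that by auto
    ultimately show ?thesis using idx unfolding b_def by (simp add: transpose_def)
  qed
qed

definition cc :: "nat \<Rightarrow> int" where
  "cc m = (if even m then int (m div 2) else - int (m div 2) - 1)"

lemma theta2_FF: "theta2 n = FF cc (n+1)"
  unfolding theta2_def FF_def cc_def by simp

lemma cc_inj: "inj_on cc A"
proof (rule inj_onI)
  fix x y assume "cc x = cc y"
  then show "x = y" unfolding cc_def by (auto split: if_splits) presburger+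
qed

lemma cc_img: "cc ` {..<2*(n+1)} \<subseteq> {-(int n+1)..int n}"
  unfolding cc_def by (auto; linarith)

lemma theta2_perm: "theta2 n permutes {-(int n+1)..int n}"
  unfolding theta2_FF by (rule FF_permutes[OF cc_inj cc_img])

lemma theta1_perm: "signed_perm n a \<Longrightarrow> theta1 a permutes {-(int n+1)..int n}"
  unfolding theta1_FF using FF_permutes[OF bseq_inj bseq_img] sp_props(1) by metis

lemma cyc_rev:
  assumes sp: "signed_perm n a" and v: "valid_reversal n (i,j)"
  shows "num_cycles {-(int n+1)..int n} (theta1 (reversal i j a) \<circ> theta2 n)
       \<le> num_cycles {-(int n+1)..int n} (theta1 a \<circ> theta2 n) + 2"
proof -
  define S where "S = {-(int n+1)..int n}"
  have fin: "finite S" unfolding S_def by simp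
  have ij: "1 \<le> i" "i \<le> j" "j \<le> n" using v unfolding valid_reversal_def by auto
  define x where "x = bseq a (2*i-2)"
  define y where "y = bseq a (2*i-1)"
  define u where "u = bseq a (2*j)"
  define w where "w = bseq a (2*j+1)"
  have inS: "bseq a m \<in> S" if "m < 2*(n+1)" for m
    using bseq_img[OF sp] that unfolding S_def by blast
  have xS: "x \<in> S" "y \<in> S" "u \<in> S" "w \<in> S" unfolding x_def y_def u_def w_def using ij by (auto intro!: inS)
  define f where "f = theta1 a \<circ> theta2 n"
  have fp: "f permutes S" unfolding f_def S_def using permutes_compose[OF theta2_perm theta1_perm[OF sp]] .
  define g where "g = transpose x w \<circ> f"
  have gp: "g permutes S" unfolding g_def using permutes_compose[OF fp permutes_swap_id[OF xS(1) xS(4)]] .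
  define h where "h = transpose y u \<circ> g"
  have hp: "h permutes S" unfolding h_def using permutes_compose[OF gp permutes_swap_id[OF xS(2) xS(3)]] .
  have h_eq: "theta1 (reversal i j a) \<circ> theta2 n = h"
    unfolding h_def g_def f_def theta1_rev[OF sp v] x_def y_def u_def w_def by (simp add: comp_assoc)
  have 1: "num_cycles S g \<le> num_cycles S f + 1"
    by (rule cycles_step[OF fin fp gp xS(1) xS(4)]) (auto simp: g_def transpose_def)
  have 2: "num_cycles S h \<le> num_cycles S g + 1"
    by (rule cycles_step[OF fin gp hp xS(2) xS(3)]) (auto simp: h_def transpose_def)
  show ?thesis using 1 2 h_eq unfolding S_def f_def by simp
qed

lemma len_id: "length (identity_sp n) = n" by (simp add: identity_sp_def)
lemma nth_id: "k < n \<Longrightarrow> identity_sp n ! k = int k + 1" by (simp add: identity_sp_def del: upt_Suc)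

lemma theta1_id: "theta1 (identity_sp n) = theta2 n"
  unfolding theta1_def theta2_def len_id
proof (rule foldr_cong)
  fix k f assume "k \<in> set [0..<n+1]"
  then have k: "k \<le> n" by auto
  have e1: "bseq (identity_sp n) (2*k) = int k"
  proof (cases k)
    case 0 then show ?thesis by simp
  next
    case (Suc l)
    then have "2*k = 2*l+2" by simp
    then show ?thesis using bseq_even[of l "identity_sp n"] nth_id[of l n] len_id[of n] Suc k by simp
  qed
  have e2: "bseq (identity_sp n) (2*k+1) = - int k - 1"
  proof (cases "k = n")
    case True then show ?thesis using bseq_last[of "identity_sp n"] len_id[of n] by simp
  next
    case False
    then show ?thesis using bseq_odd[of k "identity_sp n"] nth_id[of k n] len_id[of n] k by simp
  qed
  show "transpose (bseq (identity_sp n) (2 * k)) (bseq (identity_sp n) (2 * k + 1)) \<circ> f =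
        transpose (int k) (- int k - 1) \<circ> f" using e1 e2 by simp
qed simp_all

lemma cyc_id: "num_cycles {-(int n+1)..int n} (theta1 (identity_sp n) \<circ> theta2 n) = 2*n+2"
proof -
  have "theta1 (identity_sp n) \<circ> theta2 n = id"
    unfolding theta1_id theta2_FF using FF_invol[OF cc_inj] by auto
  moreover have "num_cycles S id = card S" if "finite S" for S :: "int set"
  proof -
    have "{{y. \<exists>k. (id ^^ k) x = y} | x. x \<in> S} = (\<lambda>x. {x}) ` S" by auto
    then show ?thesis unfolding num_cycles_def by (simp add: card_image)
  qed
  ultimately show ?thesis by simp
qed

lemma main_ineq:
  assumes "signed_perm n a" "\<forall>r\<in>set rs. valid_reversal n r" "apply_reversals a rs = identity_sp n"
  shows "2*n+2 \<le> num_cycles {-(int n+1)..int n} (theta1 a \<circ> theta2 n) + 2 * length rs"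
  using assms
proof (induction rs arbitrary: a)
  case Nil
  then have a: "a = identity_sp n" by (simp add: apply_reversals_def)
  show ?case unfolding a cyc_id by simp
next
  case (Cons r rs)
  obtain i j where r: "r = (i,j)" by fastforce
  have v: "valid_reversal n (i,j)" using Cons.prems r by simp
  have sp': "signed_perm n (reversal i j a)" using rev_sp[OF Cons.prems(1) v] .
  have "apply_reversals (reversal i j a) rs = identity_sp n"
    using Cons.prems(3) r by (simp add: apply_reversals_def)
  then have "2*n+2 \<le> num_cycles {-(int n+1)..int n} (theta1 (reversal i j a) \<circ> theta2 n) + 2 * length rs"
    using Cons.IH[OF sp'] Cons.prems(2) by (simp add: comp_def)
  then show ?case using cyc_rev[OF Cons.prems(1) v] by (simp add: comp_def)
qed

lemma reversal_append:
  assumes "j \<le> length xs" "1 \<le> i" "i \<le> j"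
  shows "reversal i j (xs @ ys) = reversal i j xs @ ys"
  using assms unfolding reversal_def by (simp add: take_append drop_append)

lemma apply_append:
  assumes "\<forall>r\<in>set rs. valid_reversal (length xs) r"
  shows "apply_reversals (xs @ ys) rs = apply_reversals xs rs @ ys"
  using assms
proof (induction rs arbitrary: xs)
  case Nil then show ?case by (simp add: apply_reversals_def)
next
  case (Cons r rs)
  obtain i j where r: "r = (i,j)" by fastforce
  have v: "valid_reversal (length xs) (i,j)" using Cons.prems r by simp
  then have e: "reversal i j (xs @ ys) = reversal i j xs @ ys"
    by (intro reversal_append) (auto simp: valid_reversal_def)
  have l: "length (reversal i j xs) = length xs" using rev_len[OF v] by simp
  have "apply_reversals (reversal i j xs @ ys) rs = apply_reversals (reversal i j xs) rs @ ys"
    using Cons.IH[of "reversal i j xs"] Cons.prems l by simp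
  then show ?case using e r by (simp add: apply_reversals_def)
qed

lemma sortable:
  "signed_perm n a \<Longrightarrow> \<exists>rs. (\<forall>r\<in>set rs. valid_reversal n r) \<and> apply_reversals a rs = identity_sp n"
proof (induction n arbitrary: a)
  case 0
  then have "a = []" using sp_props(1) by blast
  then show ?case by (intro exI[of _ "[]"]) (simp add: apply_reversals_def identity_sp_def)
next
  case (Suc n)
  note sp = Suc.prems
  have len: "length a = Suc n" using sp_props(1)[OF sp] .
  have "int (Suc n) \<in> set (map abs a)" using sp unfolding signed_perm_def by simp
  then obtain p where p: "p < Suc n" "\<bar>a!p\<bar> = int (Suc n)" using len by (auto simp: in_set_conv_nth)
  have v1: "valid_reversal (Suc n) (p+1, Suc n)" using p by (simp add: valid_reversal_def)
  define a1 where "a1 = reversal (p+1) (Suc n) a"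
  have sp1: "signed_perm (Suc n) a1" unfolding a1_def using rev_sp[OF sp v1] .
  have a1n: "a1 ! n = - a ! p" unfolding a1_def using rev_nth[OF v1 len, of n] p by simp
  obtain a2 rs0 where sp2: "signed_perm (Suc n) a2" and a2n: "a2 ! n = int (Suc n)"
    and rs0: "\<forall>r\<in>set rs0. valid_reversal (Suc n) r" "apply_reversals a rs0 = a2"
  proof (cases "a1 ! n = int (Suc n)")
    case True
    show ?thesis by (rule that[OF sp1 True, of "[(p+1, Suc n)]"]) (use v1 in \<open>simp_all add: apply_reversals_def a1_def\<close>)
  next
    case False
    then have neg: "a1 ! n = - int (Suc n)" using a1n p(2) by (auto simp: abs_if split: if_splits)
    have v2: "valid_reversal (Suc n) (Suc n, Suc n)" by (simp add: valid_reversal_def)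
    have l1: "length a1 = Suc n" using sp_props(1)[OF sp1] .
    have "reversal (Suc n) (Suc n) a1 ! n = int (Suc n)" using rev_nth[OF v2 l1, of n] neg by simp
    then show ?thesis
      by (rule that[OF rev_sp[OF sp1 v2], of "[(p+1, Suc n), (Suc n, Suc n)]"])
         (use v1 v2 in \<open>simp_all add: apply_reversals_def a1_def\<close>)
  qed
  have l2: "length a2 = Suc n" using sp_props(1)[OF sp2] .
  define xs where "xs = take n a2"
  have a2e: "a2 = xs @ [int (Suc n)]"
  proof -
    have "take (Suc n) a2 = take n a2 @ [a2!n]" by (rule take_Suc_conv_app_nth) (use l2 in simp)
    moreover have "take (Suc n) a2 = a2" using l2 by simp
    ultimately have "a2 = take n a2 @ [a2!n]" by simp
    then show ?thesis unfolding xs_def using l2 a2n by simp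
  qed
  have lx: "length xs = n" unfolding xs_def using l2 by simp
  have notin: "int (Suc n) \<notin> set (map abs xs)"
  proof
    assume "int (Suc n) \<in> set (map abs xs)"
    then obtain k where k: "k < n" "\<bar>xs!k\<bar> = int (Suc n)" using lx by (auto simp: in_set_conv_nth)
    then have "\<bar>a2!k\<bar> = \<bar>a2!n\<bar>" using a2n unfolding xs_def by simp
    then show False using sp_props(2)[OF sp2, of k n] k by simp
  qed
  have "set (map abs a2) = {1..int (Suc n)}" using sp2 unfolding signed_perm_def by simp
  then have u: "set (map abs xs) \<union> {int (Suc n)} = {1..int (Suc n)}" using a2e by auto
  have gen: "\<And>X A c. X \<union> {c} = A \<Longrightarrow> c \<notin> X \<Longrightarrow> X = A - {c}" by blast
  have "set (map abs xs) = {1..int (Suc n)} - {int (Suc n)}" by (rule gen[OF u notin])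
  also have "\<dots> = {1..int n}" by auto
  finally have spx: "signed_perm n xs" unfolding signed_perm_def using lx by simp
  obtain rs where rs: "\<forall>r\<in>set rs. valid_reversal n r" "apply_reversals xs rs = identity_sp n"
    using Suc.IH[OF spx] by blast
  have "apply_reversals a2 rs = identity_sp n @ [int (Suc n)]"
    unfolding a2e using apply_append[of rs xs "[int (Suc n)]"] rs lx by simp
  also have "\<dots> = identity_sp (Suc n)" by (simp add: identity_sp_def)
  finally have "apply_reversals a (rs0 @ rs) = identity_sp (Suc n)"
    using rs0(2) by (simp add: apply_reversals_def)
  moreover have "\<forall>r\<in>set (rs0 @ rs). valid_reversal (Suc n) r"
    using rs0(1) rs(1) by (auto simp: valid_reversal_def)
  ultimately show ?case by blast
qed

theorem proposition1:
  fixes n :: nat and a :: "int list"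
  assumes "signed_perm n a"
  shows "real (reversal_distance a)
           \<ge> (2 * real n + 2 - real (num_cycles {-(int n + 1)..int n} (theta1 a \<circ> theta2 n))) / 2"
proof -
  have len: "length a = n" using sp_props(1)[OF assms] .
  let ?P = "\<lambda>k. \<exists>rs. length rs = k \<and> (\<forall>r\<in>set rs. valid_reversal (length a) r)
       \<and> apply_reversals a rs = identity_sp (length a)"
  have ex: "\<exists>k. ?P k" using sortable[OF assms] len by blast
  have "?P (reversal_distance a)" unfolding reversal_distance_def by (rule LeastI_ex[OF ex])
  then obtain rs where rs: "length rs = reversal_distance a" "\<forall>r\<in>set rs. valid_reversal n r"
    "apply_reversals a rs = identity_sp n" using len by blast
  have "2*n+2 \<le> num_cycles {-(int n+1)..int n} (theta1 a \<circ> theta2 n) + 2 * reversal_distance a"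
    using main_ineq[OF assms rs(2) rs(3)] rs(1) by simp
  then have "real (2*n+2) \<le> real (num_cycles {-(int n+1)..int n} (theta1 a \<circ> theta2 n) + 2 * reversal_distance a)"
    by (simp only: of_nat_le_iff)
  then show ?thesis by simp
qed

end
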